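(* Let $\mathbf H$ be a random vector and let $\varepsilon,\varepsilon_1,\dots,\varepsilon_p$ be mean-zero random variables and $V\sim\mathrm{Uniform}(0,1)$, all mutually independent and independent of $\mathbf H$. Let $f,f_2,\dots,f_{p+1},g,g_1,\dots,g_{p+1}$ be measurable functions and define $X_1=g_1(\mathbf H)+\varepsilon_1$, $X_j=f_j(X_1,\dots,X_{j-1})+g_j(\mathbf H)+\varepsilon_j$ for $j=2,\dots,p$, $D=\mathbf 1\{V\le \pi(\mathbf X,\mathbf H)\}$ with $\pi(\mathbf X,\mathbf H)=\big[(1+\exp(f_{p+1}(X_1,\dots,X_p)))(1+\exp(g_{p+1}(\mathbf H)))\big]^{-1}$ (so $\mathbb P(D=1\mid\mathbf X,\mathbf H)=\pi(\mathbf X,\mathbf H)$), and $Y=f(X_1,\dots,X_p,D)+g(\mathbf H)+\varepsilon$, assuming all the random variables involved are integrable. Then $Y-\mathbb E[Y\mid\mathbf H]$ is conditionally independent of $\mathbf H$ given $(\mathbf X,\mathbb E[\mathbf X\mid\mathbf H],\mathbb E[D\mid\mathbf H],D)$; that is, the proxy sufficiency condition ($Y-S_Y\perp\mathbf H\mid(\mathbf X,\mathbf S_{-Y},D)$ with $S_Y=\mathbb E[Y\mid\mathbf H]$, $\mathbf S_{-Y}=\mathbb E[(\mathbf X^\top,D)^\top\mid\mathbf H]$) holds for this model.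
   Context: $\mathbf X=(X_1,\dots,X_p)$ are observed covariates, $D\in\{0,1\}$ the treatment, $Y$ the outcome, $\mathbf H$ an unmeasured confounder. *)

theory Defs
  imports "HOL-Probability.Probability"
begin

definition cond_indep ::
  "'a measure \<Rightarrow> 'b measure \<Rightarrow> ('a \<Rightarrow> 'b) \<Rightarrow> 'c measure \<Rightarrow> ('a \<Rightarrow> 'c)
     \<Rightarrow> 'd measure \<Rightarrow> ('a \<Rightarrow> 'd) \<Rightarrow> bool" where
  "cond_indep M MA A MB B MC C \<longleftrightarrow>
     (\<forall>S\<in>sets MA. \<forall>T\<in>sets MB. AE \<omega> in M.
        real_cond_exp M (vimage_algebra (space M) C MC)
          (indicator (A -` S \<inter> B -` T \<inter> space M)) \<omega>
        = real_cond_exp M (vimage_algebra (space M) C MC) (indicator (A -` S \<inter> space M)) \<omega>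
          * real_cond_exp M (vimage_algebra (space M) C MC) (indicator (B -` T \<inter> space M)) \<omega>)"

end

theory Submission
  imports Defs
begin


fun PV :: "(nat \<Rightarrow> (nat \<Rightarrow> real) \<Rightarrow> real) \<Rightarrow> nat \<Rightarrow> (nat \<Rightarrow> real) \<Rightarrow> (nat \<Rightarrow> real) \<Rightarrow> nat \<Rightarrow> real" where
  "PV fX 0 a n = (\<lambda>i. 0)"
| "PV fX (Suc j) a n = (PV fX j a n)(Suc j := (if j = 0 then 0 else fX (Suc j) (restrict (PV fX j a n) {1..<Suc j})) + a (Suc j) + n (Suc j))"

lemma PV_dep:
  "(\<And>i. i \<in> {1..j} \<Longrightarrow> a i = a' i) \<Longrightarrow> (\<And>i. i \<in> {1..j} \<Longrightarrow> n i = n' i) \<Longrightarrow> PV fX j a n = PV fX j a' n'"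
proof (induction j)
  case 0 then show ?case by simp
next
  case (Suc j)
  have "PV fX j a n = PV fX j a' n'" using Suc by auto
  then have e: "PV fX j a n = PV fX j a' n'" .
  show ?case unfolding PV.simps e using Suc.prems by simp
qed

lemma PV_out: "i \<notin> {1..j} \<Longrightarrow> PV fX j a n i = 0"
  by (induction j) auto

lemma PV_meas:
  assumes fX: "\<And>j. j \<in> {2..q} \<Longrightarrow> fX j \<in> borel_measurable (PiM {1..<j} (\<lambda>_. borel))"
    and a: "\<And>i. i \<in> {1..j} \<Longrightarrow> (\<lambda>x. fa x i) \<in> borel_measurable Q"
    and n: "\<And>i. i \<in> {1..j} \<Longrightarrow> (\<lambda>x. fn x i) \<in> borel_measurable Q"
    and jq: "j \<le> q"
  shows "(\<lambda>x. PV fX j (fa x) (fn x) i) \<in> borel_measurable Q"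
  using a n jq
proof (induction j arbitrary: i)
  case 0 then show ?case by simp
next
  case (Suc j)
  have IH: "\<And>i. (\<lambda>x. PV fX j (fa x) (fn x) i) \<in> borel_measurable Q"
    using Suc by auto
  have new: "(\<lambda>x. (if j = 0 then 0 else fX (Suc j) (restrict (PV fX j (fa x) (fn x)) {1..<Suc j}))
      + fa x (Suc j) + fn x (Suc j)) \<in> borel_measurable Q"
  proof -
    have r: "(\<lambda>x. restrict (PV fX j (fa x) (fn x)) {1..<Suc j}) \<in> measurable Q (PiM {1..<Suc j} (\<lambda>_. borel))"
      using measurable_restrict[of "{1..<Suc j}" "\<lambda>i x. PV fX j (fa x) (fn x) i" Q "\<lambda>_. borel"] IH
      by (simp add: restrict_def)
    have "(\<lambda>x. (if j = 0 then 0 else fX (Suc j) (restrict (PV fX j (fa x) (fn x)) {1..<Suc j}))) \<in> borel_measurable Q"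
    proof (cases "j = 0")
      case False
      then have "Suc j \<in> {2..q}" using Suc.prems by auto
      from measurable_compose[OF r fX[OF this]] False show ?thesis by simp
    qed simp
    moreover have "(\<lambda>x. fa x (Suc j)) \<in> borel_measurable Q" "(\<lambda>x. fn x (Suc j)) \<in> borel_measurable Q"
      using Suc.prems by auto
    ultimately show ?thesis by measurable
  qed
  show ?case
    using IH[of i] new by (cases "i = Suc j") auto
qed

lemma integrable_cong_space:
  assumes "integrable M f" "\<And>x. x \<in> space M \<Longrightarrow> g x = f x" shows "integrable M g"
proof -
  have "integrable M g = integrable M f" by (rule Bochner_Integration.integrable_cong) (auto simp: assms)
  then show ?thesis using assms(1) by blast
qed

definition sg :: "real \<Rightarrow> real" where "sg t = 1 / (1 + exp t)"

lemma sg_pos: "0 < sg t" unfolding sg_def by (simp add: add_pos_pos)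
lemma sg_le1: "sg t \<le> 1" unfolding sg_def using exp_gt_zero[of t] by (simp add: divide_le_eq not_less add_nonneg_nonneg)
lemma sg_meas[measurable]: "sg \<in> borel_measurable borel" unfolding sg_def by measurable

fun BB :: "(nat \<Rightarrow> (nat \<Rightarrow> real) \<Rightarrow> real) \<Rightarrow> nat set \<Rightarrow> nat \<Rightarrow> (nat \<Rightarrow> real) \<Rightarrow> nat \<Rightarrow> real" where
  "BB ka JJ 0 s = (\<lambda>i. 0)"
| "BB ka JJ (Suc j) s = (BB ka JJ j s)(Suc j := s (Suc j) - (if j = 0 then 0 else ka (Suc j) (restrict (BB ka JJ j s) JJ)))"

lemma unif_int:
  assumes "0 \<le> c" "c \<le> (1::real)"
  shows "(\<integral>y. (if y \<le> c then 1 else 0 :: real) \<partial>(uniform_measure lborel {0..1})) = c"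
proof -
  have "(\<lambda>y. (if y \<le> c then 1 else 0 :: real)) = indicator {..c}"
    by (auto simp: fun_eq_iff split: split_indicator)
  moreover have "{0..1} \<inter> {..c} = {0..c}" using assms by auto
  ultimately show ?thesis using assms by simp
qed

locale mdl = prob_space M for M :: "'a measure" +

  fixes p :: nat
    and H :: "'a \<Rightarrow> real ^ 'k"
    and eps V :: "'a \<Rightarrow> real"
    and epsX :: "nat \<Rightarrow> 'a \<Rightarrow> real"
    and fX :: "nat \<Rightarrow> (nat \<Rightarrow> real) \<Rightarrow> real"
    and fY :: "(nat \<Rightarrow> real) \<Rightarrow> real \<Rightarrow> real"
    and gX :: "nat \<Rightarrow> real ^ 'k \<Rightarrow> real"
    and gY :: "real ^ 'k \<Rightarrow> real"
    and X :: "nat \<Rightarrow> 'a \<Rightarrow> real"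
    and D Y :: "'a \<Rightarrow> real"
  assumes p: "1 \<le> p"
    and H_meas: "H \<in> borel_measurable M"
    and eps_meas: "eps \<in> borel_measurable M"
    and V_meas: "V \<in> borel_measurable M"
    and epsX_meas: "\<And>j. j \<in> {1..p} \<Longrightarrow> epsX j \<in> borel_measurable M"
    and indep_noise: "prob_space.indep_vars M (\<lambda>_. borel)
        (\<lambda>i. if i = 0 then eps else if i \<le> p then epsX i else V) {0..Suc p}"
    and indep_H: "prob_space.indep_set M
        (sets (vimage_algebra (space M)
          (\<lambda>\<omega>. restrict (\<lambda>i. (if i = 0 then eps else if i \<le> p then epsX i else V) \<omega>) {0..Suc p})
          (PiM {0..Suc p} (\<lambda>_. borel))))
        (sets (vimage_algebra (space M) H borel))"
    and eps_int: "integrable M eps" and eps_mean: "prob_space.expectation M eps = 0"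
    and epsX_int: "\<And>j. j \<in> {1..p} \<Longrightarrow> integrable M (epsX j)"
    and epsX_mean: "\<And>j. j \<in> {1..p} \<Longrightarrow> prob_space.expectation M (epsX j) = 0"
    and V_unif: "distr M borel V = uniform_measure lborel {0..1}"
    and fX_meas: "\<And>j. j \<in> {2..Suc p} \<Longrightarrow> fX j \<in> borel_measurable (PiM {1..<j} (\<lambda>_. borel))"
    and fY_meas: "(\<lambda>(x, d). fY x d) \<in> borel_measurable (PiM {1..p} (\<lambda>_. borel) \<Otimes>\<^sub>M borel)"
    and gX_meas: "\<And>j. j \<in> {1..Suc p} \<Longrightarrow> gX j \<in> borel_measurable borel"
    and gY_meas: "gY \<in> borel_measurable borel"
    and X1: "\<And>\<omega>. \<omega> \<in> space M \<Longrightarrow> X 1 \<omega> = gX 1 (H \<omega>) + epsX 1 \<omega>"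
    and Xj: "\<And>j \<omega>. j \<in> {2..p} \<Longrightarrow> \<omega> \<in> space M \<Longrightarrow>
        X j \<omega> = fX j (restrict (\<lambda>i. X i \<omega>) {1..<j}) + gX j (H \<omega>) + epsX j \<omega>"
    and D_def: "\<And>\<omega>. \<omega> \<in> space M \<Longrightarrow>
        D \<omega> = (if V \<omega> \<le> 1 / ((1 + exp (fX (Suc p) (restrict (\<lambda>i. X i \<omega>) {1..p})))
                               * (1 + exp (gX (Suc p) (H \<omega>)))) then 1 else 0)"
    and Y_def: "\<And>\<omega>. \<omega> \<in> space M \<Longrightarrow>
        Y \<omega> = fY (restrict (\<lambda>i. X i \<omega>) {1..p}) (D \<omega>) + gY (H \<omega>) + eps \<omega>"
    and X_int: "\<And>j. j \<in> {1..p} \<Longrightarrow> integrable M (X j)"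
    and Y_int: "integrable M Y"
    and D_int: "integrable M D"
    and fX_int: "\<And>j. j \<in> {2..p} \<Longrightarrow> integrable M (\<lambda>\<omega>. fX j (restrict (\<lambda>i. X i \<omega>) {1..<j}))"
    and fY_int: "integrable M (\<lambda>\<omega>. fY (restrict (\<lambda>i. X i \<omega>) {1..p}) (D \<omega>))"
    and gX_int: "\<And>j. j \<in> {1..p} \<Longrightarrow> integrable M (\<lambda>\<omega>. gX j (H \<omega>))"
    and gY_int: "integrable M (\<lambda>\<omega>. gY (H \<omega>))"

context mdl
begin

definition "noise = (\<lambda>i. if i = 0 then eps else if i \<le> p then epsX i else V)"
definition "N = (\<lambda>\<omega>. restrict (\<lambda>i. noise i \<omega>) {0..Suc p})"
abbreviation "MN \<equiv> PiM {0..Suc p} (\<lambda>_. borel :: real measure)"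
abbreviation "AM \<equiv> PiM {1..Suc p} (\<lambda>_. borel :: real measure)"
definition "LN = distr M MN N"
definition "LNi i = distr M borel (noise i)"
definition "LH = distr M borel H"
definition "FH = vimage_algebra (space M) H borel"

lemma noise_meas[measurable]: "noise i \<in> borel_measurable M"
  using eps_meas V_meas epsX_meas unfolding noise_def by auto

lemma N_meas[measurable]: "N \<in> measurable M MN"
  unfolding N_def by measurable

lemma N_apply: "i \<in> {0..Suc p} \<Longrightarrow> N \<omega> i = noise i \<omega>"
  unfolding N_def by simp

lemma N0: "N \<omega> 0 = eps \<omega>" by (simp add: N_apply noise_def)
lemma NV: "N \<omega> (Suc p) = V \<omega>" by (simp add: N_apply noise_def)
lemma NX: "j \<in> {1..p} \<Longrightarrow> N \<omega> j = epsX j \<omega>" by (simp add: N_apply noise_def)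

lemma prob_LN: "prob_space LN" unfolding LN_def by (rule prob_space_distr) simp
lemma prob_LH: "prob_space LH" unfolding LH_def by (rule prob_space_distr) (simp add: H_meas)
lemma prob_LNi: "prob_space (LNi i)" unfolding LNi_def by (rule prob_space_distr) simp


lemma indep_HN: "LH \<Otimes>\<^sub>M LN = distr M (borel \<Otimes>\<^sub>M MN) (\<lambda>\<omega>. (H \<omega>, N \<omega>))"
proof (rule pair_measure_eqI)
  have 1: "indep_set (sets (vimage_algebra (space M) N MN)) (sets (vimage_algebra (space M) H borel))"
    using indep_H unfolding N_def noise_def .
  show "sigma_finite_measure LH" "sigma_finite_measure LN"
    using prob_LH prob_LN by (auto intro: prob_space_imp_sigma_finite)
  show "sets (LH \<Otimes>\<^sub>M LN) = sets (distr M (borel \<Otimes>\<^sub>M MN) (\<lambda>\<omega>. (H \<omega>, N \<omega>)))"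
    unfolding LH_def LN_def sets_distr by (rule sets_pair_measure_cong) simp_all
  fix A B assume A: "A \<in> sets LH" and B: "B \<in> sets LN"
  have A': "A \<in> sets borel" using A unfolding LH_def by simp
  have B': "B \<in> sets MN" using B unfolding LN_def by simp
  have eq: "(\<lambda>\<omega>. (H \<omega>, N \<omega>)) -` (A \<times> B) \<inter> space M = (N -` B \<inter> space M) \<inter> (H -` A \<inter> space M)"
    by auto
  have "prob ((N -` B \<inter> space M) \<inter> (H -` A \<inter> space M)) = prob (N -` B \<inter> space M) * prob (H -` A \<inter> space M)"
    using 1 unfolding indep_sets2_eq using in_vimage_algebra[OF A'] in_vimage_algebra[OF B'] by blast
  moreover have "A \<times> B \<in> sets (borel \<Otimes>\<^sub>M MN)" using A' B' by simp
  ultimately show "emeasure LH A * emeasure LN B = emeasure (distr M (borel \<Otimes>\<^sub>M MN) (\<lambda>\<omega>. (H \<omega>, N \<omega>))) (A \<times> B)"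
    unfolding LH_def LN_def using A' B' H_meas
    by (simp add: emeasure_distr eq emeasure_eq_measure ennreal_mult' mult.commute)
qed

lemma LN_eq: "LN = PiM {0..Suc p} LNi"
proof -
  have "indep_vars (\<lambda>_. borel) noise {0..Suc p}" using indep_noise unfolding noise_def .
  from indep_vars_iff_distr_eq_PiM'[of "{0..Suc p}" noise "\<lambda>_. borel", THEN iffD1, OF _ _ this]
  have "distr M MN (\<lambda>x. \<lambda>i\<in>{0..Suc p}. noise i x) = (\<Pi>\<^sub>M i\<in>{0..Suc p}. distr M borel (noise i))"
    by auto
  then show ?thesis unfolding LN_def LNi_def N_def .
qed

lemma subalg_FH: "subalgebra M FH"
  unfolding FH_def subalgebra_def using H_meas sets_image_in_sets[of M "space M" H borel]
  by simp

lemma sfs_FH: "sigma_finite_subalgebra M FH"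
proof -
  interpret finite_measure_subalgebra M FH
    by unfold_locales (rule subalg_FH)
  show ?thesis by (rule finite_measure_subalgebra_is_sigma_finite) unfold_locales
qed


lemma sets_LN[measurable_cong]: "sets LN = sets MN" unfolding LN_def by simp
lemma space_LN: "space LN = space MN" unfolding LN_def by simp
lemma sets_LH[measurable_cong]: "sets LH = sets (borel :: (real^'k) measure)" unfolding LH_def by simp
lemma space_LH: "space LH = UNIV" unfolding LH_def by simp

lemma HN_meas[measurable]: "(\<lambda>\<omega>. (H \<omega>, N \<omega>)) \<in> measurable M (borel \<Otimes>\<^sub>M MN)"
  using H_meas N_meas by measurable

lemma psi_meas:
  fixes \<phi> :: "(real^'k) \<times> (nat \<Rightarrow> real) \<Rightarrow> real"
  assumes [measurable]: "\<phi> \<in> borel_measurable (borel \<Otimes>\<^sub>M MN)"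
  shows "(\<lambda>h. \<integral>n. \<phi> (h, n) \<partial>LN) \<in> borel_measurable borel"
proof -
  interpret LN: prob_space LN by (rule prob_LN)
  have "(\<lambda>(h, n). \<phi> (h, n)) \<in> borel_measurable (borel \<Otimes>\<^sub>M LN)"
    by (simp add: measurable_cong_sets[OF sets_pair_measure_cong[OF refl sets_LN] refl])
  then show ?thesis by (rule LN.borel_measurable_lebesgue_integral)
qed

lemma FUB:
  fixes \<phi> :: "(real^'k) \<times> (nat \<Rightarrow> real) \<Rightarrow> real"
  assumes \<phi>m[measurable]: "\<phi> \<in> borel_measurable (borel \<Otimes>\<^sub>M MN)"
    and int: "integrable M (\<lambda>\<omega>. \<phi> (H \<omega>, N \<omega>))"
  shows "(\<integral>\<omega>. \<phi> (H \<omega>, N \<omega>) \<partial>M) = (\<integral>\<omega>. (\<integral>n. \<phi> (H \<omega>, n) \<partial>LN) \<partial>M)"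
    and "integrable M (\<lambda>\<omega>. \<integral>n. \<phi> (H \<omega>, n) \<partial>LN)"
proof -
  interpret LN: prob_space LN by (rule prob_LN)
  interpret LH: prob_space LH by (rule prob_LH)
  interpret P: pair_sigma_finite LH LN ..
  have \<psi>m[measurable]: "(\<lambda>h. \<integral>n. \<phi> (h, n) \<partial>LN) \<in> borel_measurable borel"
    by (rule psi_meas) simp
  have intP: "integrable (LH \<Otimes>\<^sub>M LN) \<phi>"
    unfolding indep_HN by (subst integrable_distr_eq) (auto simp: int)
  have "(\<integral>\<omega>. \<phi> (H \<omega>, N \<omega>) \<partial>M) = integral\<^sup>L (LH \<Otimes>\<^sub>M LN) \<phi>"
    unfolding indep_HN by (subst integral_distr) auto
  also have "\<dots> = (\<integral>h. (\<integral>n. \<phi> (h, n) \<partial>LN) \<partial>LH)"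
    by (rule P.integral_fst'[symmetric, OF intP])
  also have "\<dots> = (\<integral>\<omega>. (\<integral>n. \<phi> (H \<omega>, n) \<partial>LN) \<partial>M)"
    unfolding LH_def by (subst integral_distr) (auto simp: H_meas)
  finally show "(\<integral>\<omega>. \<phi> (H \<omega>, N \<omega>) \<partial>M) = (\<integral>\<omega>. (\<integral>n. \<phi> (H \<omega>, n) \<partial>LN) \<partial>M)" .
  have "integrable LH (\<lambda>h. \<integral>n. \<phi> (h, n) \<partial>LN)"
    by (rule P.integrable_fst'[OF intP])
  then show "integrable M (\<lambda>\<omega>. \<integral>n. \<phi> (H \<omega>, n) \<partial>LN)"
    unfolding LH_def by (subst (asm) integrable_distr_eq) (auto simp: H_meas)
qed

lemma FH_sets: "A \<in> sets FH \<Longrightarrow> \<exists>T \<in> sets borel. A = H -` T \<inter> space M"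
  unfolding FH_def by (subst (asm) sets_vimage_algebra2) auto

lemma H_FH[measurable]: "H \<in> measurable FH borel"
  unfolding FH_def by (rule measurable_vimage_algebra1) simp

lemma CE:
  fixes \<phi> :: "(real^'k) \<times> (nat \<Rightarrow> real) \<Rightarrow> real"
  assumes \<phi>m[measurable]: "\<phi> \<in> borel_measurable (borel \<Otimes>\<^sub>M MN)"
    and int: "integrable M (\<lambda>\<omega>. \<phi> (H \<omega>, N \<omega>))"
  shows "AE \<omega> in M. real_cond_exp M FH (\<lambda>\<omega>. \<phi> (H \<omega>, N \<omega>)) \<omega> = (\<integral>n. \<phi> (H \<omega>, n) \<partial>LN)"
proof -
  interpret sigma_finite_subalgebra M FH by (rule sfs_FH)
  have \<psi>m[measurable]: "(\<lambda>h. \<integral>n. \<phi> (h, n) \<partial>LN) \<in> borel_measurable borel"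
    by (rule psi_meas) simp
  show ?thesis
  proof (rule real_cond_exp_charact)
    show "integrable M (\<lambda>\<omega>. \<phi> (H \<omega>, N \<omega>))" by (rule int)
    show "integrable M (\<lambda>\<omega>. \<integral>n. \<phi> (H \<omega>, n) \<partial>LN)" by (rule FUB(2)[OF \<phi>m int])
    show "(\<lambda>\<omega>. \<integral>n. \<phi> (H \<omega>, n) \<partial>LN) \<in> borel_measurable FH" by measurable
    fix A assume "A \<in> sets FH"
    then obtain T where T[measurable]: "T \<in> sets borel" and A: "A = H -` T \<inter> space M"
      using FH_sets by blast
    define \<phi>' where "\<phi>' = (\<lambda>(h, n). indicator T h * \<phi> (h, n))"
    have \<phi>'m[measurable]: "\<phi>' \<in> borel_measurable (borel \<Otimes>\<^sub>M MN)" unfolding \<phi>'_def by measurable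
    have ind: "\<And>\<omega>. \<omega> \<in> space M \<Longrightarrow> indicator A \<omega> = (indicator T (H \<omega>) :: real)"
      unfolding A by (auto split: split_indicator)
    have int': "integrable M (\<lambda>\<omega>. \<phi>' (H \<omega>, N \<omega>))"
    proof -
      have "integrable M (\<lambda>\<omega>. indicator A \<omega> * \<phi> (H \<omega>, N \<omega>))"
        using integrable_mult_indicator[of A M "\<lambda>\<omega>. \<phi> (H \<omega>, N \<omega>)"] int A H_meas by auto
      moreover have "\<And>\<omega>. \<omega> \<in> space M \<Longrightarrow> \<phi>' (H \<omega>, N \<omega>) = indicator A \<omega> * \<phi> (H \<omega>, N \<omega>)"
        by (auto simp: \<phi>'_def ind)
      ultimately show ?thesis
        by (rule integrable_cong_space)
    qed
    have "(\<integral>\<omega>\<in>A. \<phi> (H \<omega>, N \<omega>) \<partial>M) = (\<integral>\<omega>. \<phi>' (H \<omega>, N \<omega>) \<partial>M)"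
      unfolding set_lebesgue_integral_def by (rule Bochner_Integration.integral_cong) (auto simp: \<phi>'_def ind)
    also have "\<dots> = (\<integral>\<omega>. (\<integral>n. \<phi>' (H \<omega>, n) \<partial>LN) \<partial>M)"
      by (rule FUB(1)[OF \<phi>'m int'])
    also have "\<dots> = (\<integral>\<omega>\<in>A. (\<integral>n. \<phi> (H \<omega>, n) \<partial>LN) \<partial>M)"
      unfolding set_lebesgue_integral_def by (rule Bochner_Integration.integral_cong) (auto simp: \<phi>'_def ind)
    finally show "(\<integral>\<omega>\<in>A. \<phi> (H \<omega>, N \<omega>) \<partial>M) = (\<integral>\<omega>\<in>A. (\<integral>n. \<phi> (H \<omega>, n) \<partial>LN) \<partial>M)" .
  qed
qed


definition "G h = restrict (\<lambda>j. gX j h) {1..Suc p}"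
definition "xv a n = restrict (PV fX p a n) {1..p}"
definition "q1 a n = sg (fX (Suc p) (xv a n))"
definition "pif a n = q1 a n * sg (a (Suc p))"
definition "dD a n = (if n (Suc p) \<le> pif a n then 1 else 0 :: real)"
definition "kap j a = (\<integral>n. fX j (restrict (PV fX (j - 1) a n) {1..<j}) \<partial>LN)"
definition "EXf j a = (if j = 1 then 0 else kap j a) + a j"
definition "kk a = (\<integral>n. q1 a n \<partial>LN)"
definition "mm a = (\<integral>n. fY (xv a n) (dD a n) \<partial>LN)"
definition "Gam s d = restrict ((BB kap {1..Suc p} p s)(Suc p := ln (kk (restrict (BB kap {1..Suc p} p s) {1..Suc p}) / d - 1))) {1..Suc p}"

lemma PV_X:
  assumes \<omega>: "\<omega> \<in> space M"
  shows "j \<le> p \<Longrightarrow> i \<in> {1..j} \<Longrightarrow> PV fX j (G (H \<omega>)) (N \<omega>) i = X i \<omega>"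
proof (induction j arbitrary: i)
  case 0 then show ?case by simp
next
  case (Suc j)
  have IH: "\<And>i. i \<in> {1..j} \<Longrightarrow> PV fX j (G (H \<omega>)) (N \<omega>) i = X i \<omega>" using Suc by auto
  show ?case
  proof (cases "i = Suc j")
    case False
    then show ?thesis using Suc.prems IH by auto
  next
    case True
    have r: "restrict (PV fX j (G (H \<omega>)) (N \<omega>)) {1..<Suc j} = restrict (\<lambda>i. X i \<omega>) {1..<Suc j}"
      using IH by (auto simp: restrict_def)
    have g: "G (H \<omega>) (Suc j) = gX (Suc j) (H \<omega>)" using Suc.prems by (simp add: G_def)
    have e: "N \<omega> (Suc j) = epsX (Suc j) \<omega>" using Suc.prems by (intro NX) auto
    show ?thesis
    proof (cases "j = 0")
      case True
      then show ?thesis using \<open>i = Suc j\<close> g e X1[OF \<omega>] by simp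
    next
      case False
      then have "Suc j \<in> {2..p}" using Suc.prems by auto
      from Xj[OF this \<omega>] show ?thesis using \<open>i = Suc j\<close> g e r False by simp
    qed
  qed
qed

lemma xv_X: "\<omega> \<in> space M \<Longrightarrow> xv (G (H \<omega>)) (N \<omega>) = restrict (\<lambda>i. X i \<omega>) {1..p}"
  unfolding xv_def using PV_X by (auto simp: restrict_def)

lemma D_dD: "\<omega> \<in> space M \<Longrightarrow> D \<omega> = dD (G (H \<omega>)) (N \<omega>)"
  unfolding dD_def pif_def q1_def using D_def xv_X NV
  by (simp add: G_def sg_def)

lemma Y_eq: "\<omega> \<in> space M \<Longrightarrow> Y \<omega> = fY (xv (G (H \<omega>)) (N \<omega>)) (dD (G (H \<omega>)) (N \<omega>)) + gY (H \<omega>) + N \<omega> 0"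
  using Y_def xv_X D_dD N0 by simp

lemma Xj_eq: "j \<in> {1..p} \<Longrightarrow> \<omega> \<in> space M \<Longrightarrow>
   X j \<omega> = (if j = 1 then 0 else fX j (restrict (PV fX (j - 1) (G (H \<omega>)) (N \<omega>)) {1..<j})) + gX j (H \<omega>) + N \<omega> j"
proof -
  assume j: "j \<in> {1..p}" and \<omega>: "\<omega> \<in> space M"
  have "X j \<omega> = PV fX j (G (H \<omega>)) (N \<omega>) j" using PV_X[OF \<omega>, of j j] j by simp
  moreover obtain j' where j': "j = Suc j'" using j by (cases j) auto
  ultimately show ?thesis using j by (simp add: G_def)
qed

context
  fixes Q :: "'q measure" and fa fn :: "'q \<Rightarrow> nat \<Rightarrow> real"
  assumes fa: "\<And>i. i \<in> {1..Suc p} \<Longrightarrow> (\<lambda>x. fa x i) \<in> borel_measurable Q"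
    and fn: "\<And>i. i \<in> {0..Suc p} \<Longrightarrow> (\<lambda>x. fn x i) \<in> borel_measurable Q"
begin

lemma PV_m: "j \<le> p \<Longrightarrow> (\<lambda>x. PV fX j (fa x) (fn x) i) \<in> borel_measurable Q"
proof (rule PV_meas[where q="Suc p"])
  show "\<And>j. j \<in> {2..Suc p} \<Longrightarrow> fX j \<in> borel_measurable (PiM {1..<j} (\<lambda>_. borel))" by (rule fX_meas)
qed (auto intro: fa fn)

lemma xv_m: "(\<lambda>x. xv (fa x) (fn x)) \<in> measurable Q (PiM {1..p} (\<lambda>_. borel))"
  unfolding xv_def using measurable_restrict[of "{1..p}" "\<lambda>i x. PV fX p (fa x) (fn x) i" Q "\<lambda>_. borel"] PV_m
  by (simp add: restrict_def)

lemma q1_m: "(\<lambda>x. q1 (fa x) (fn x)) \<in> borel_measurable Q"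
proof -
  have "fX (Suc p) \<in> borel_measurable (PiM {1..p} (\<lambda>_. borel))"
    using fX_meas[of "Suc p"] p by (simp add: atLeastLessThanSuc_atLeastAtMost)
  from measurable_compose[OF xv_m this] show ?thesis unfolding q1_def by measurable
qed

lemma pif_m: "(\<lambda>x. pif (fa x) (fn x)) \<in> borel_measurable Q"
  unfolding pif_def using q1_m fa[of "Suc p"] by measurable

lemma dD_m: "(\<lambda>x. dD (fa x) (fn x)) \<in> borel_measurable Q"
  unfolding dD_def using pif_m fn[of "Suc p"] by measurable

lemma fY_m: "(\<lambda>x. fY (xv (fa x) (fn x)) (dD (fa x) (fn x))) \<in> borel_measurable Q"
proof -
  have "(\<lambda>x. (xv (fa x) (fn x), dD (fa x) (fn x))) \<in> measurable Q (PiM {1..p} (\<lambda>_. borel) \<Otimes>\<^sub>M borel)"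
    using xv_m dD_m by measurable
  from measurable_compose[OF this fY_meas] show ?thesis by simp
qed

lemma fXp_m: "j \<in> {2..p} \<Longrightarrow> (\<lambda>x. fX j (restrict (PV fX (j - 1) (fa x) (fn x)) {1..<j})) \<in> borel_measurable Q"
proof -
  assume j: "j \<in> {2..p}"
  have pm: "\<And>i. (\<lambda>x. PV fX (j - 1) (fa x) (fn x) i) \<in> borel_measurable Q" using j by (intro PV_m) auto
  have "(\<lambda>x. restrict (PV fX (j - 1) (fa x) (fn x)) {1..<j}) \<in> measurable Q (PiM {1..<j} (\<lambda>_. borel))"
    using measurable_restrict[of "{1..<j}" "\<lambda>i x. PV fX (j - 1) (fa x) (fn x) i" Q "\<lambda>_. borel"] pm
    by (simp add: restrict_def)
  moreover have "fX j \<in> borel_measurable (PiM {1..<j} (\<lambda>_. borel))" using j by (intro fX_meas) auto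
  ultimately show ?thesis by (rule measurable_compose)
qed

end


lemma G_comp: "i \<in> {1..Suc p} \<Longrightarrow> (\<lambda>x. G (fst x) i) \<in> borel_measurable (borel \<Otimes>\<^sub>M MN)"
  unfolding G_def using gX_meas by (simp add: measurable_compose[OF measurable_fst])
lemma snd_comp: "i \<in> {0..Suc p} \<Longrightarrow> (\<lambda>x. snd x i) \<in> borel_measurable (borel \<Otimes>\<^sub>M (MN :: (nat \<Rightarrow> real) measure))"
  by measurable
lemma fst_compA: "i \<in> {1..Suc p} \<Longrightarrow> (\<lambda>x. fst x i) \<in> borel_measurable (AM \<Otimes>\<^sub>M (MN :: (nat \<Rightarrow> real) measure))"
  by measurable
lemma snd_compA: "i \<in> {0..Suc p} \<Longrightarrow> (\<lambda>x. snd x i) \<in> borel_measurable (AM \<Otimes>\<^sub>M (MN :: (nat \<Rightarrow> real) measure))"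
  by measurable

lemma HN_1: "j \<le> p \<Longrightarrow> (\<lambda>x. PV fX j (G (fst x)) (snd x) i) \<in> borel_measurable (borel \<Otimes>\<^sub>M MN)"
  using PV_m[where Q="borel \<Otimes>\<^sub>M MN" and fa="\<lambda>x. G (fst x)" and fn=snd] G_comp snd_comp by blast

lemma HN_2: "(\<lambda>x. xv (G (fst x)) (snd x)) \<in> measurable (borel \<Otimes>\<^sub>M MN) (PiM {1..p} (\<lambda>_. borel))"
  using xv_m[where Q="borel \<Otimes>\<^sub>M MN" and fa="\<lambda>x. G (fst x)" and fn=snd] G_comp snd_comp by blast

lemma HN_3: "(\<lambda>x. q1 (G (fst x)) (snd x)) \<in> borel_measurable (borel \<Otimes>\<^sub>M MN)"
  using q1_m[where Q="borel \<Otimes>\<^sub>M MN" and fa="\<lambda>x. G (fst x)" and fn=snd] G_comp snd_comp by blast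

lemma HN_4: "(\<lambda>x. pif (G (fst x)) (snd x)) \<in> borel_measurable (borel \<Otimes>\<^sub>M MN)"
  using pif_m[where Q="borel \<Otimes>\<^sub>M MN" and fa="\<lambda>x. G (fst x)" and fn=snd] G_comp snd_comp by blast

lemma HN_5: "(\<lambda>x. dD (G (fst x)) (snd x)) \<in> borel_measurable (borel \<Otimes>\<^sub>M MN)"
  using dD_m[where Q="borel \<Otimes>\<^sub>M MN" and fa="\<lambda>x. G (fst x)" and fn=snd] G_comp snd_comp by blast

lemma HN_6: "(\<lambda>x. fY (xv (G (fst x)) (snd x)) (dD (G (fst x)) (snd x))) \<in> borel_measurable (borel \<Otimes>\<^sub>M MN)"
  using fY_m[where Q="borel \<Otimes>\<^sub>M MN" and fa="\<lambda>x. G (fst x)" and fn=snd] G_comp snd_comp by blast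

lemma HN_7: "j \<in> {2..p} \<Longrightarrow> (\<lambda>x. fX j (restrict (PV fX (j - 1) (G (fst x)) (snd x)) {1..<j})) \<in> borel_measurable (borel \<Otimes>\<^sub>M MN)"
  using fXp_m[where Q="borel \<Otimes>\<^sub>M MN" and fa="\<lambda>x. G (fst x)" and fn=snd] G_comp snd_comp by blast

lemmas HN_ms = HN_1 HN_2 HN_3 HN_4 HN_5 HN_6 HN_7

lemma AN_1: "j \<le> p \<Longrightarrow> (\<lambda>x. PV fX j (fst x) (snd x) i) \<in> borel_measurable (AM \<Otimes>\<^sub>M MN)"
  using PV_m[where Q="AM \<Otimes>\<^sub>M MN" and fa=fst and fn=snd] fst_compA snd_compA by blast

lemma AN_2: "(\<lambda>x. xv (fst x) (snd x)) \<in> measurable (AM \<Otimes>\<^sub>M MN) (PiM {1..p} (\<lambda>_. borel))"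
  using xv_m[where Q="AM \<Otimes>\<^sub>M MN" and fa=fst and fn=snd] fst_compA snd_compA by blast

lemma AN_3: "(\<lambda>x. q1 (fst x) (snd x)) \<in> borel_measurable (AM \<Otimes>\<^sub>M MN)"
  using q1_m[where Q="AM \<Otimes>\<^sub>M MN" and fa=fst and fn=snd] fst_compA snd_compA by blast

lemma AN_4: "(\<lambda>x. pif (fst x) (snd x)) \<in> borel_measurable (AM \<Otimes>\<^sub>M MN)"
  using pif_m[where Q="AM \<Otimes>\<^sub>M MN" and fa=fst and fn=snd] fst_compA snd_compA by blast

lemma AN_5: "(\<lambda>x. dD (fst x) (snd x)) \<in> borel_measurable (AM \<Otimes>\<^sub>M MN)"
  using dD_m[where Q="AM \<Otimes>\<^sub>M MN" and fa=fst and fn=snd] fst_compA snd_compA by blast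

lemma AN_6: "(\<lambda>x. fY (xv (fst x) (snd x)) (dD (fst x) (snd x))) \<in> borel_measurable (AM \<Otimes>\<^sub>M MN)"
  using fY_m[where Q="AM \<Otimes>\<^sub>M MN" and fa=fst and fn=snd] fst_compA snd_compA by blast

lemma AN_7: "j \<in> {2..p} \<Longrightarrow> (\<lambda>x. fX j (restrict (PV fX (j - 1) (fst x) (snd x)) {1..<j})) \<in> borel_measurable (AM \<Otimes>\<^sub>M MN)"
  using fXp_m[where Q="AM \<Otimes>\<^sub>M MN" and fa=fst and fn=snd] fst_compA snd_compA by blast

lemmas AN_ms = AN_1 AN_2 AN_3 AN_4 AN_5 AN_6 AN_7

lemma G_meas[measurable]: "G \<in> measurable borel AM"
  unfolding G_def using gX_meas by measurable

lemma ce_sum3: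
  assumes "integrable M A" "integrable M B" "integrable M C"
    and Zm: "Z \<in> borel_measurable M" and Z: "\<And>\<omega>. \<omega> \<in> space M \<Longrightarrow> Z \<omega> = A \<omega> + B \<omega> + C \<omega>"
  shows "AE \<omega> in M. real_cond_exp M FH Z \<omega> = real_cond_exp M FH A \<omega> + real_cond_exp M FH B \<omega> + real_cond_exp M FH C \<omega>"
proof -
  interpret sigma_finite_subalgebra M FH by (rule sfs_FH)
  have [measurable]: "A \<in> borel_measurable M" "B \<in> borel_measurable M" "C \<in> borel_measurable M"
    using assms by (auto intro: borel_measurable_integrable)
  have 1: "AE \<omega> in M. real_cond_exp M FH Z \<omega> = real_cond_exp M FH (\<lambda>\<omega>. A \<omega> + B \<omega> + C \<omega>) \<omega>"
    by (rule real_cond_exp_cong) (auto simp: Z Zm)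
  have 2: "AE \<omega> in M. real_cond_exp M FH (\<lambda>\<omega>. (A \<omega> + B \<omega>) + C \<omega>) \<omega> = real_cond_exp M FH (\<lambda>\<omega>. A \<omega> + B \<omega>) \<omega> + real_cond_exp M FH C \<omega>"
    using assms by (intro real_cond_exp_add) auto
  have 3: "AE \<omega> in M. real_cond_exp M FH (\<lambda>\<omega>. A \<omega> + B \<omega>) \<omega> = real_cond_exp M FH A \<omega> + real_cond_exp M FH B \<omega>"
    using assms by (intro real_cond_exp_add) auto
  show ?thesis using 1 2 3 by eventually_elim simp
qed

lemma ce_N0:
  assumes i: "i \<in> {0..Suc p}" and int: "integrable M (noise i)" and e: "expectation (noise i) = 0"
  shows "AE \<omega> in M. real_cond_exp M FH (noise i) \<omega> = 0"
proof -
  interpret sigma_finite_subalgebra M FH by (rule sfs_FH)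
  have m: "(\<lambda>(h::real^'k, n::nat \<Rightarrow> real). n i) \<in> borel_measurable (borel \<Otimes>\<^sub>M MN)" using i by measurable
  have int': "integrable M (\<lambda>\<omega>. (\<lambda>(h, n). n i) (H \<omega>, N \<omega>))"
    using int by (rule integrable_cong_space) (simp add: N_apply[OF i])
  have 1: "AE \<omega> in M. real_cond_exp M FH (noise i) \<omega> = real_cond_exp M FH (\<lambda>\<omega>. (\<lambda>(h, n). n i) (H \<omega>, N \<omega>)) \<omega>"
    using i by (intro real_cond_exp_cong) (auto simp: N_apply[OF i])
  have "(\<integral>n. n i \<partial>LN) = expectation (noise i)"
    unfolding LN_def using i by (subst integral_distr) (auto simp: N_apply[OF i])
  then show ?thesis using 1 CE[OF m int'] e by auto
qed

lemma ce_X: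
  assumes j: "j \<in> {1..p}"
  shows "AE \<omega> in M. real_cond_exp M FH (X j) \<omega> = EXf j (G (H \<omega>))"
proof -
  interpret sigma_finite_subalgebra M FH by (rule sfs_FH)
  have jN: "j \<in> {0..Suc p}" using j by auto
  define \<phi> where "\<phi> = (\<lambda>(h, n). if j = 1 then 0 else fX j (restrict (PV fX (j - 1) (G h) n) {1..<j}))"
  have \<phi>m: "\<phi> \<in> borel_measurable (borel \<Otimes>\<^sub>M MN)"
  proof (cases "j = 1")
    case False
    then have "j \<in> {2..p}" using j by auto
    from HN_ms(7)[OF this] False show ?thesis by (simp add: \<phi>_def case_prod_beta')
  qed (simp add: \<phi>_def)
  have restr: "\<And>\<omega>. \<omega> \<in> space M \<Longrightarrow> restrict (PV fX (j - 1) (G (H \<omega>)) (N \<omega>)) {1..<j} = restrict (\<lambda>i. X i \<omega>) {1..<j}"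
  proof (rule ext)
    fix \<omega> i assume \<omega>: "\<omega> \<in> space M"
    show "restrict (PV fX (j - 1) (G (H \<omega>)) (N \<omega>)) {1..<j} i = restrict (\<lambda>i. X i \<omega>) {1..<j} i"
      using PV_X[OF \<omega>, of "j - 1" i] j by (auto simp: restrict_def)
  qed
  have intA: "integrable M (\<lambda>\<omega>. \<phi> (H \<omega>, N \<omega>))"
  proof (cases "j = 1")
    case False
    then have "j \<in> {2..p}" using j by auto
    from fX_int[OF this] show ?thesis
      by (rule integrable_cong_space) (use False in \<open>simp add: \<phi>_def restr[simplified]\<close>)
  qed (simp add: \<phi>_def)
  have intB: "integrable M (\<lambda>\<omega>. gX j (H \<omega>))" using gX_int j by simp
  have intC: "integrable M (noise j)" using epsX_int[OF j] j by (simp add: noise_def)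
  have Xm: "X j \<in> borel_measurable M" using X_int[OF j] by (rule borel_measurable_integrable)
  have sum: "AE \<omega> in M. real_cond_exp M FH (X j) \<omega> = real_cond_exp M FH (\<lambda>\<omega>. \<phi> (H \<omega>, N \<omega>)) \<omega>
      + real_cond_exp M FH (\<lambda>\<omega>. gX j (H \<omega>)) \<omega> + real_cond_exp M FH (noise j) \<omega>"
    using intA intB intC Xm
    by (rule ce_sum3) (auto simp: Xj_eq[OF j] \<phi>_def N_apply[OF jN])
  have a: "AE \<omega> in M. real_cond_exp M FH (\<lambda>\<omega>. \<phi> (H \<omega>, N \<omega>)) \<omega> = (\<integral>n. \<phi> (H \<omega>, n) \<partial>LN)"
    by (rule CE[OF \<phi>m intA])
  have b: "AE \<omega> in M. real_cond_exp M FH (\<lambda>\<omega>. gX j (H \<omega>)) \<omega> = gX j (H \<omega>)"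
    using intB j gX_meas[of j] by (intro real_cond_exp_F_meas) auto
  have c: "AE \<omega> in M. real_cond_exp M FH (noise j) \<omega> = 0"
    using j intC epsX_mean[OF j] by (intro ce_N0) (auto simp: noise_def)
  have d: "\<And>\<omega>. (\<integral>n. \<phi> (H \<omega>, n) \<partial>LN) = (if j = 1 then 0 else kap j (G (H \<omega>)))"
    by (simp add: \<phi>_def kap_def)
  have g: "\<And>\<omega>. G (H \<omega>) j = gX j (H \<omega>)" using j by (simp add: G_def)
  show ?thesis using sum a b c by eventually_elim (simp add: d g EXf_def)
qed

lemma ce_D: "AE \<omega> in M. real_cond_exp M FH D \<omega> = (\<integral>n. dD (G (H \<omega>)) n \<partial>LN)"
proof -
  interpret sigma_finite_subalgebra M FH by (rule sfs_FH)
  have m: "(\<lambda>(h, n). dD (G h) n) \<in> borel_measurable (borel \<Otimes>\<^sub>M MN)"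
    using HN_ms(5) by (simp add: case_prod_beta')
  have int: "integrable M (\<lambda>\<omega>. (\<lambda>(h, n). dD (G h) n) (H \<omega>, N \<omega>))"
    using D_int by (rule integrable_cong_space) (simp add: D_dD)
  have 1: "AE \<omega> in M. real_cond_exp M FH D \<omega> = real_cond_exp M FH (\<lambda>\<omega>. (\<lambda>(h, n). dD (G h) n) (H \<omega>, N \<omega>)) \<omega>"
    using D_int m by (intro real_cond_exp_cong) (auto simp: D_dD borel_measurable_integrable)
  show ?thesis using 1 CE[OF m int] by auto
qed

lemma ce_Y: "AE \<omega> in M. real_cond_exp M FH Y \<omega> = mm (G (H \<omega>)) + gY (H \<omega>)"
proof -
  interpret sigma_finite_subalgebra M FH by (rule sfs_FH)
  define \<phi> where "\<phi> = (\<lambda>(h, n). fY (xv (G h) n) (dD (G h) n))"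
  have \<phi>m: "\<phi> \<in> borel_measurable (borel \<Otimes>\<^sub>M MN)"
    using HN_ms(6) by (simp add: \<phi>_def case_prod_beta')
  have intA: "integrable M (\<lambda>\<omega>. \<phi> (H \<omega>, N \<omega>))"
    using fY_int by (rule integrable_cong_space) (simp add: \<phi>_def xv_X D_dD)
  have intC: "integrable M (noise 0)" using eps_int by (simp add: noise_def)
  have Ym: "Y \<in> borel_measurable M" using Y_int by (rule borel_measurable_integrable)
  have sum: "AE \<omega> in M. real_cond_exp M FH Y \<omega> = real_cond_exp M FH (\<lambda>\<omega>. \<phi> (H \<omega>, N \<omega>)) \<omega>
      + real_cond_exp M FH (\<lambda>\<omega>. gY (H \<omega>)) \<omega> + real_cond_exp M FH (noise 0) \<omega>"
    using intA gY_int intC Ym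
    by (rule ce_sum3) (auto simp: Y_eq \<phi>_def N0 noise_def)
  have a: "AE \<omega> in M. real_cond_exp M FH (\<lambda>\<omega>. \<phi> (H \<omega>, N \<omega>)) \<omega> = (\<integral>n. \<phi> (H \<omega>, n) \<partial>LN)"
    by (rule CE[OF \<phi>m intA])
  have b: "AE \<omega> in M. real_cond_exp M FH (\<lambda>\<omega>. gY (H \<omega>)) \<omega> = gY (H \<omega>)"
    using gY_int gY_meas by (intro real_cond_exp_F_meas) auto
  have c: "AE \<omega> in M. real_cond_exp M FH (noise 0) \<omega> = 0"
    using intC eps_mean by (intro ce_N0) (auto simp: noise_def)
  show ?thesis using sum a b c by eventually_elim (simp add: \<phi>_def mm_def)
qed


lemma sets_PiLN[measurable_cong]: "sets (PiM A LNi) = sets (PiM A (\<lambda>_. borel :: real measure))"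
  by (rule sets_PiM_cong) (auto simp: LNi_def)

lemma PS: "product_sigma_finite LNi"
  unfolding product_sigma_finite_def using prob_LNi by (auto intro: prob_space_imp_sigma_finite)

lemma const_comp: "(\<lambda>x. a i) \<in> borel_measurable Q" by simp
lemma id_comp: "i \<in> {0..Suc p} \<Longrightarrow> (\<lambda>n. n i) \<in> borel_measurable MN" by simp

lemma a_pif_m: "pif a \<in> borel_measurable MN"
  by (rule pif_m[where Q=MN and fa="\<lambda>_. a" and fn="\<lambda>n. n"]) simp_all
lemma a_dD_m: "dD a \<in> borel_measurable MN"
  by (rule dD_m[where Q=MN and fa="\<lambda>_. a" and fn="\<lambda>n. n"]) simp_all
lemma a_q1_m: "q1 a \<in> borel_measurable MN"
  by (rule q1_m[where Q=MN and fa="\<lambda>_. a" and fn="\<lambda>n. n"]) simp_all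

lemma q1_pos: "0 < q1 a n" and q1_le: "q1 a n \<le> 1"
  unfolding q1_def by (auto simp: sg_pos sg_le1)
lemma pif_nn: "0 \<le> pif a n" and pif_le: "pif a n \<le> 1"
  unfolding pif_def using q1_pos[of a n] q1_le[of a n] sg_pos[of "a (Suc p)"] sg_le1[of "a (Suc p)"]
  by (auto simp: mult_le_one)

lemma q1_abs: "\<bar>q1 a n\<bar> \<le> 1" using q1_pos[of a n] q1_le[of a n] by simp
lemma pif_abs: "\<bar>pif a n\<bar> \<le> 1" using pif_nn[of a n] pif_le[of a n] by simp

lemma xv_dep: "(\<And>i. i \<in> {1..p} \<Longrightarrow> n i = n' i) \<Longrightarrow> xv a n = xv a n'"
  unfolding xv_def using PV_dep[of p a a n n' fX] by simp

lemma pif_upd: "pif a (x(Suc p := y)) = pif a x"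
  unfolding pif_def q1_def by (subst xv_dep[of "x(Suc p := y)" x]) auto

lemma int_PiM_insert:
  fixes f :: "(nat \<Rightarrow> real) \<Rightarrow> real" and B :: real
  assumes fm: "f \<in> borel_measurable MN" and fb: "\<And>n. \<bar>f n\<bar> \<le> B"
    and eq: "{0..Suc p} = insert k R" and kR: "k \<notin> R"
  shows "(\<integral>n. f n \<partial>LN) = (\<integral>x. (\<integral>y. f (x(k := y)) \<partial>LNi k) \<partial>PiM R LNi)"
proof -
  interpret product_sigma_finite LNi by (rule PS)
  have fR: "finite R" using eq by (metis finite_atLeastAtMost finite_insert)
  interpret PP: prob_space "PiM (insert k R) LNi"
    by (rule prob_space_PiM) (rule prob_LNi)
  have ss: "sets (PiM (insert k R) LNi) = sets MN"
    unfolding eq[symmetric] by (rule sets_PiLN)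
  have fm': "f \<in> borel_measurable (PiM (insert k R) LNi)"
    using fm measurable_cong_sets[OF ss refl] by blast
  have "integrable (PiM (insert k R) LNi) f"
    using fb fm' by (intro PP.integrable_const_bound[where B=B]) auto
  then have "integral\<^sup>L (PiM (insert k R) LNi) f = (\<integral>x. (\<integral>y. f (x(k := y)) \<partial>LNi k) \<partial>PiM R LNi)"
    using fR kR by (intro product_integral_insert) auto
  then show ?thesis unfolding LN_eq eq .
qed

lemma LNiSuc: "LNi (Suc p) = uniform_measure lborel {0..1}"
  unfolding LNi_def noise_def using V_unif p by simp

lemma dD_int: "(\<integral>n. dD a n \<partial>LN) = kk a * sg (a (Suc p))"
proof -
  let ?PP = "PiM {0..p} LNi"
  have eqS: "{0..Suc p} = insert (Suc p) {0..p}" by auto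
  have "(\<integral>n. dD a n \<partial>LN) = (\<integral>x. (\<integral>y. dD a (x(Suc p := y)) \<partial>LNi (Suc p)) \<partial>?PP)"
    by (rule int_PiM_insert[OF a_dD_m _ eqS, where B=1]) (auto simp: dD_def)
  also have "\<dots> = (\<integral>x. pif a x \<partial>?PP)"
  proof (rule Bochner_Integration.integral_cong[OF refl])
    fix x
    have "(\<integral>y. dD a (x(Suc p := y)) \<partial>LNi (Suc p)) = (\<integral>y. (if y \<le> pif a x then 1 else 0) \<partial>uniform_measure lborel {0..1})"
      unfolding LNiSuc dD_def pif_upd by simp
    also have "\<dots> = pif a x" using pif_nn pif_le by (rule unif_int)
    finally show "(\<integral>y. dD a (x(Suc p := y)) \<partial>LNi (Suc p)) = pif a x" .
  qed
  also have "\<dots> = (\<integral>x. (\<integral>y. pif a (x(Suc p := y)) \<partial>LNi (Suc p)) \<partial>?PP)"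
  proof (rule Bochner_Integration.integral_cong[OF refl])
    fix x
    show "pif a x = (\<integral>y. pif a (x(Suc p := y)) \<partial>LNi (Suc p))"
      unfolding pif_upd using prob_space.prob_space[OF prob_LNi] by simp
  qed
  also have "\<dots> = (\<integral>n. pif a n \<partial>LN)"
    by (rule int_PiM_insert[OF a_pif_m _ eqS, where B=1, symmetric]) (auto simp: pif_abs)
  also have "\<dots> = kk a * sg (a (Suc p))"
    unfolding pif_def kk_def by simp
  finally show ?thesis .
qed

lemma kk_pos: "0 < kk a"
proof -
  interpret LN: prob_space LN by (rule prob_LN)
  have m: "q1 a \<in> borel_measurable LN" using a_q1_m by (simp add: measurable_cong_sets[OF sets_LN refl])
  have int: "integrable LN (q1 a)"
    using m by (intro LN.integrable_const_bound[where B=1]) (auto simp: q1_abs)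
  have nn: "0 \<le> kk a" unfolding kk_def using q1_pos by (intro integral_nonneg_AE) (auto intro: less_imp_le)
  moreover have "kk a \<noteq> 0"
  proof
    assume "kk a = 0"
    then have "AE n in LN. q1 a n = 0"
      unfolding kk_def using int q1_pos by (subst (asm) integral_nonneg_eq_0_iff_AE) (auto intro: less_imp_le)
    then have "AE n in LN. False" by eventually_elim (metis q1_pos less_irrefl)
    then show False using LN.AE_False by simp
  qed
  ultimately show ?thesis by simp
qed

lemma kap_dep: assumes "\<And>i. i \<in> {1..<j} \<Longrightarrow> a i = b i" shows "kap j a = kap j b"
proof -
  have "\<And>n. PV fX (j - 1) a n = PV fX (j - 1) b n" by (rule PV_dep) (auto simp: assms)
  then show ?thesis by (simp add: kap_def)
qed

lemma kk_dep: assumes "\<And>i. i \<in> {1..p} \<Longrightarrow> a i = b i" shows "kk a = kk b"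
proof -
  have "\<And>n. PV fX p a n = PV fX p b n" by (rule PV_dep) (auto simp: assms)
  then show ?thesis by (simp add: kk_def q1_def xv_def)
qed


lemma BB_out: "i \<notin> {1..j} \<Longrightarrow> BB ka JJ j s i = 0"
  by (induction j) auto

lemma BB_rec:
  assumes s: "\<And>j. j \<in> {1..p} \<Longrightarrow> s j = EXf j a"
  shows "j \<le> p \<Longrightarrow> i \<in> {1..j} \<Longrightarrow> BB kap {1..Suc p} j s i = a i"
proof (induction j arbitrary: i)
  case 0 then show ?case by simp
next
  case (Suc j)
  have IH: "\<And>i. i \<in> {1..j} \<Longrightarrow> BB kap {1..Suc p} j s i = a i" using Suc by auto
  show ?case
  proof (cases "i = Suc j")
    case False then show ?thesis using Suc.prems IH by auto
  next
    case True
    have k: "kap (Suc j) (restrict (BB kap {1..Suc p} j s) {1..Suc p}) = kap (Suc j) a"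
      by (rule kap_dep) (use IH Suc.prems in auto)
    have "s (Suc j) = EXf (Suc j) a" using s Suc.prems by auto
    then show ?thesis using True k by (simp add: EXf_def)
  qed
qed

lemma Gam_rec:
  assumes a: "a \<in> extensional {1..Suc p}" and s: "\<And>j. j \<in> {1..p} \<Longrightarrow> s j = EXf j a"
    and d: "d = kk a * sg (a (Suc p))"
  shows "Gam s d = a"
proof -
  let ?B = "BB kap {1..Suc p} p s"
  have B: "\<And>i. i \<in> {1..p} \<Longrightarrow> ?B i = a i"
  proof -
    fix i assume i: "i \<in> {1..p}"
    show "?B i = a i" by (rule BB_rec[OF s]) (use i in auto)
  qed
  have kk: "kk (restrict ?B {1..Suc p}) = kk a"
  proof (rule kk_dep)
    fix i assume i: "i \<in> {1..p}"
    then have "i \<in> {1..Suc p}" by auto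
    then show "restrict ?B {1..Suc p} i = a i" using B[OF i] by (simp only: restrict_apply')
  qed
  have kpos: "0 < kk a" by (rule kk_pos)
  have "kk a / d - 1 = exp (a (Suc p))"
    using kpos unfolding d sg_def by (simp add: field_simps add_pos_pos)
  then have l: "ln (kk a / d - 1) = a (Suc p)" by simp
  show ?thesis
  proof (rule ext)
    fix i show "Gam s d i = a i"
    proof (cases "i \<in> {1..Suc p}")
      case True
      then show ?thesis unfolding Gam_def kk l using B by (cases "i = Suc p") auto
    next
      case False
      have "Gam s d i = undefined" unfolding Gam_def restrict_apply if_not_P[OF False] ..
      then show ?thesis using extensional_arb[OF a False] by simp
    qed
  qed
qed

lemma G_ext: "G h \<in> extensional {1..Suc p}" unfolding G_def by simp

lemma AM_LN: "sets (AM \<Otimes>\<^sub>M LN) = sets (AM \<Otimes>\<^sub>M MN)"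
  by (rule sets_pair_measure_cong[OF refl sets_LN])

lemma kap_m: "j \<in> {2..p} \<Longrightarrow> kap j \<in> borel_measurable AM"
proof -
  assume j: "j \<in> {2..p}"
  interpret LN: prob_space LN by (rule prob_LN)
  have "(\<lambda>(a, n). fX j (restrict (PV fX (j - 1) a n) {1..<j})) \<in> borel_measurable (AM \<Otimes>\<^sub>M LN)"
    using AN_7[OF j] by (simp add: measurable_cong_sets[OF AM_LN refl] case_prod_beta')
  then show ?thesis unfolding kap_def by (rule LN.borel_measurable_lebesgue_integral)
qed

lemma kk_m: "kk \<in> borel_measurable AM"
proof -
  interpret LN: prob_space LN by (rule prob_LN)
  have "(\<lambda>(a, n). q1 a n) \<in> borel_measurable (AM \<Otimes>\<^sub>M LN)"
    using AN_3 by (simp add: measurable_cong_sets[OF AM_LN refl] case_prod_beta')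
  then show ?thesis unfolding kk_def by (rule LN.borel_measurable_lebesgue_integral)
qed

lemma mm_m: "mm \<in> borel_measurable AM"
proof -
  interpret LN: prob_space LN by (rule prob_LN)
  have "(\<lambda>(a, n). fY (xv a n) (dD a n)) \<in> borel_measurable (AM \<Otimes>\<^sub>M LN)"
    using AN_6 by (simp add: measurable_cong_sets[OF AM_LN refl] case_prod_beta')
  then show ?thesis unfolding mm_def by (rule LN.borel_measurable_lebesgue_integral)
qed

lemma BB_m:
  assumes fs: "\<And>i. i \<in> {1..p} \<Longrightarrow> (\<lambda>x. fs x i) \<in> borel_measurable Q"
  shows "j \<le> p \<Longrightarrow> (\<lambda>x. BB kap {1..Suc p} j (fs x) i) \<in> borel_measurable Q"
proof (induction j arbitrary: i)
  case 0 then show ?case by simp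
next
  case (Suc j)
  have IH: "\<And>i. (\<lambda>x. BB kap {1..Suc p} j (fs x) i) \<in> borel_measurable Q" using Suc by auto
  have r0: "(\<lambda>x. \<lambda>i\<in>{1..Suc p}. BB kap {1..Suc p} j (fs x) i) \<in> measurable Q AM"
    by (rule measurable_restrict) (rule IH)
  then have r: "(\<lambda>x. restrict (BB kap {1..Suc p} j (fs x)) {1..Suc p}) \<in> measurable Q AM" .
  have k: "(\<lambda>x. if j = 0 then 0 else kap (Suc j) (restrict (BB kap {1..Suc p} j (fs x)) {1..Suc p})) \<in> borel_measurable Q"
  proof (cases "j = 0")
    case False
    then have "Suc j \<in> {2..p}" using Suc.prems by auto
    from measurable_compose[OF r kap_m[OF this]] False show ?thesis by simp
  qed simp
  have f: "(\<lambda>x. fs x (Suc j)) \<in> borel_measurable Q" using fs Suc.prems by auto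
  have new: "(\<lambda>x. fs x (Suc j) - (if j = 0 then 0 else kap (Suc j) (restrict (BB kap {1..Suc p} j (fs x)) {1..Suc p}))) \<in> borel_measurable Q"
    using f k by measurable
  show ?case
  proof (cases "i = Suc j")
    case True
    then show ?thesis using new by (simp only: BB.simps fun_upd_same)
  next
    case False
    show ?thesis unfolding BB.simps fun_upd_other[OF False] by (rule IH)
  qed
qed

lemma Gam_m: "(\<lambda>x. Gam (fst x) (snd x)) \<in> measurable (PiM {1..p} (\<lambda>_. borel) \<Otimes>\<^sub>M borel) AM"
proof -
  let ?Q = "PiM {1..p} (\<lambda>_. borel :: real measure) \<Otimes>\<^sub>M (borel :: real measure)"
  have fs: "\<And>i. i \<in> {1..p} \<Longrightarrow> (\<lambda>x. fst x i) \<in> borel_measurable ?Q" by measurable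
  have B: "\<And>i. (\<lambda>x. BB kap {1..Suc p} p (fst x) i) \<in> borel_measurable ?Q"
    by (rule BB_m[OF fs]) auto
  have r0: "(\<lambda>x. \<lambda>i\<in>{1..Suc p}. BB kap {1..Suc p} p (fst x) i) \<in> measurable ?Q AM"
    by (rule measurable_restrict) (rule B)
  then have r: "(\<lambda>x. restrict (BB kap {1..Suc p} p (fst x)) {1..Suc p}) \<in> measurable ?Q AM" .
  have l: "(\<lambda>x. ln (kk (restrict (BB kap {1..Suc p} p (fst x)) {1..Suc p}) / snd x - 1)) \<in> borel_measurable ?Q"
    using measurable_compose[OF r kk_m] by measurable
  have c: "\<And>i. (\<lambda>x. ((BB kap {1..Suc p} p (fst x))(Suc p := ln (kk (restrict (BB kap {1..Suc p} p (fst x)) {1..Suc p}) / snd x - 1))) i) \<in> borel_measurable ?Q"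
    subgoal for i using B[of i] l by (cases "i = Suc p") auto
    done
  have "(\<lambda>x. \<lambda>i\<in>{1..Suc p}. ((BB kap {1..Suc p} p (fst x))(Suc p := ln (kk (restrict (BB kap {1..Suc p} p (fst x)) {1..Suc p}) / snd x - 1))) i) \<in> measurable ?Q AM"
    by (rule measurable_restrict) (rule c)
  then show ?thesis unfolding Gam_def .
qed


abbreviation "FCM \<equiv> PiM {1..p} (\<lambda>_. borel::real measure) \<Otimes>\<^sub>M PiM {1..p} (\<lambda>_. borel::real measure) \<Otimes>\<^sub>M (borel::real measure) \<Otimes>\<^sub>M (borel :: real measure)"
definition "CC \<omega> = (restrict (\<lambda>i. X i \<omega>) {1..p}, restrict (\<lambda>i. real_cond_exp M FH (X i) \<omega>) {1..p}, real_cond_exp M FH D \<omega>, D \<omega>)"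
definition "FC = vimage_algebra (space M) CC FCM"
definition "Fm c = fY (fst c) (snd (snd (snd c))) - mm (Gam (fst (snd c)) (fst (snd (snd c))))"
definition "Cp h n = (xv (G h) n, restrict (\<lambda>i. EXf i (G h)) {1..p}, kk (G h) * sg (G h (Suc p)), dD (G h) n)"
definition "psi S c = (\<integral>e. (indicator S (Fm c + e) :: real) \<partial>LNi 0)"

lemma CC_meas[measurable]: "CC \<in> measurable M FCM"
proof -
  have X: "\<And>i. i \<in> {1..p} \<Longrightarrow> X i \<in> borel_measurable M"
    using X_int by (auto intro: borel_measurable_integrable)
  have Dm[measurable]: "D \<in> borel_measurable M" using D_int by (rule borel_measurable_integrable)
  have 1: "(\<lambda>\<omega>. \<lambda>i\<in>{1..p}. X i \<omega>) \<in> measurable M (PiM {1..p} (\<lambda>_. borel))"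
    by (rule measurable_restrict) (rule X)
  have 2: "(\<lambda>\<omega>. \<lambda>i\<in>{1..p}. real_cond_exp M FH (X i) \<omega>) \<in> measurable M (PiM {1..p} (\<lambda>_. borel))"
    by (rule measurable_restrict) simp
  show ?thesis unfolding CC_def using 1 2 by measurable
qed

lemma Fm_meas[measurable]: "Fm \<in> borel_measurable FCM"
proof -
  have a: "(\<lambda>c::(nat \<Rightarrow> real) \<times> (nat \<Rightarrow> real) \<times> real \<times> real. (fst c, snd (snd (snd c)))) \<in> measurable FCM (PiM {1..p} (\<lambda>_. borel) \<Otimes>\<^sub>M borel)"
    by measurable
  have b: "(\<lambda>c::(nat \<Rightarrow> real) \<times> (nat \<Rightarrow> real) \<times> real \<times> real. (fst (snd c), fst (snd (snd c)))) \<in> measurable FCM (PiM {1..p} (\<lambda>_. borel) \<Otimes>\<^sub>M borel)"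
    by measurable
  have 1: "(\<lambda>c. fY (fst c) (snd (snd (snd c)))) \<in> borel_measurable FCM"
    using measurable_compose[OF a fY_meas] by simp
  have 2: "(\<lambda>c. mm (Gam (fst (snd c)) (fst (snd (snd c))))) \<in> borel_measurable FCM"
    using measurable_compose[OF measurable_compose[OF b Gam_m] mm_m] by simp
  show ?thesis unfolding Fm_def using 1 2 by measurable
qed

lemma psi_bound: "\<bar>psi S c\<bar> \<le> 1"
proof -
  have "(\<lambda>e. indicator S (Fm c + e) :: real) = indicator ((\<lambda>e. Fm c + e) -` S)"
    by (auto simp: fun_eq_iff split: split_indicator)
  then have e: "psi S c = measure (LNi 0) ((\<lambda>e. Fm c + e) -` S \<inter> space (LNi 0))"
    unfolding psi_def by simp
  have "psi S c \<le> 1" unfolding e by (rule prob_space.prob_le_1[OF prob_LNi])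
  moreover have "0 \<le> psi S c" unfolding e by (rule measure_nonneg)
  ultimately show ?thesis by simp
qed

lemma psi_m[measurable]: "S \<in> sets borel \<Longrightarrow> psi S \<in> borel_measurable FCM"
proof -
  assume S[measurable]: "S \<in> sets borel"
  interpret L0: prob_space "LNi 0" by (rule prob_LNi)
  have s0: "sets (FCM \<Otimes>\<^sub>M LNi 0) = sets (FCM \<Otimes>\<^sub>M borel)"
    by (rule sets_pair_measure_cong) (auto simp: LNi_def)
  have "(\<lambda>(c, e). indicator S (Fm c + e) :: real) \<in> borel_measurable (FCM \<Otimes>\<^sub>M borel)"
    by measurable
  then have "(\<lambda>(c, e). indicator S (Fm c + e) :: real) \<in> borel_measurable (FCM \<Otimes>\<^sub>M LNi 0)"
    unfolding measurable_cong_sets[OF s0 refl] .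
  from L0.borel_measurable_lebesgue_integral[OF this] show ?thesis unfolding psi_def .
qed

lemma dD_dep: "(\<And>i. i \<in> {1..Suc p} \<Longrightarrow> n i = n' i) \<Longrightarrow> dD a n = dD a n'"
  unfolding dD_def pif_def q1_def by (subst xv_dep[of n n']) auto

lemma Cp_upd0: "Cp h (x(0 := e)) = Cp h x"
  unfolding Cp_def by (subst xv_dep[of "x(0 := e)" x], simp, subst dD_dep[of "x(0 := e)" x]) auto

lemma Cp_meas: "(\<lambda>x. Cp (fst x) (snd x)) \<in> measurable (borel \<Otimes>\<^sub>M MN) FCM"
proof -
  have E: "\<And>i. i \<in> {1..p} \<Longrightarrow> (\<lambda>h. EXf i (G h)) \<in> borel_measurable borel"
  proof -
    fix i assume i: "i \<in> {1..p}"
    have g: "(\<lambda>h. G h i) \<in> borel_measurable borel" using i gX_meas by (simp add: G_def)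
    show "(\<lambda>h. EXf i (G h)) \<in> borel_measurable borel"
    proof (cases "i = 1")
      case False
      then have "i \<in> {2..p}" using i by auto
      from measurable_compose[OF G_meas kap_m[OF this]] g False show ?thesis
        unfolding EXf_def by measurable
    qed (use g in \<open>simp add: EXf_def\<close>)
  qed
  have 2: "(\<lambda>h. \<lambda>i\<in>{1..p}. EXf i (G h)) \<in> measurable borel (PiM {1..p} (\<lambda>_. borel))"
    by (rule measurable_restrict) (rule E)
  have 3: "(\<lambda>h. kk (G h) * sg (G h (Suc p))) \<in> borel_measurable borel"
    using measurable_compose[OF G_meas kk_m] gX_meas[of "Suc p"] by (simp add: G_def)
  show ?thesis unfolding Cp_def using HN_2 HN_5 2 3 by measurable
qed

lemma CC_Cp: "AE \<omega> in M. CC \<omega> = Cp (H \<omega>) (N \<omega>)"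
proof -
  have 1: "AE \<omega> in M. \<forall>j\<in>{1..p}. real_cond_exp M FH (X j) \<omega> = EXf j (G (H \<omega>))"
    by (rule AE_finite_allI) (auto intro: ce_X)
  show ?thesis using 1 ce_D AE_space
  proof eventually_elim
    case (elim \<omega>)
    then have True: "\<omega> \<in> space M" by simp
      have "restrict (\<lambda>i. real_cond_exp M FH (X i) \<omega>) {1..p} = restrict (\<lambda>i. EXf i (G (H \<omega>))) {1..p}"
        using elim by (auto simp: restrict_def)
      then show ?case unfolding CC_def Cp_def using elim True
        by (simp add: xv_X D_dD dD_int)
  qed
qed


lemma bint: "f \<in> borel_measurable M \<Longrightarrow> (\<And>\<omega>. \<omega> \<in> space M \<Longrightarrow> \<bar>f \<omega>\<bar> \<le> (B::real)) \<Longrightarrow> integrable M f"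
  by (rule integrable_const_bound[where B=B]) auto

lemma Fm_Cp: "Fm (Cp h n) = fY (xv (G h) n) (dD (G h) n) - mm (G h)"
proof -
  have "Gam (restrict (\<lambda>i. EXf i (G h)) {1..p}) (kk (G h) * sg (G h (Suc p))) = G h"
    by (rule Gam_rec[OF G_ext]) auto
  then show ?thesis unfolding Fm_def Cp_def by simp
qed

lemma Z_eq: "AE \<omega> in M. Y \<omega> - real_cond_exp M FH Y \<omega> = Fm (CC \<omega>) + eps \<omega>"
  using CC_Cp ce_Y AE_space
proof eventually_elim
  case (elim \<omega>)
  then show ?case by (simp add: Fm_Cp Y_eq N0)
qed

lemma KEY:
  assumes U[measurable]: "U \<in> sets FCM" and T[measurable]: "T \<in> sets (borel :: (real^'k) measure)"
    and S[measurable]: "S \<in> sets (borel :: real measure)"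
  shows "(\<integral>\<omega>. indicator U (CC \<omega>) * indicator T (H \<omega>) * indicator S (Fm (CC \<omega>) + eps \<omega>) \<partial>M)
       = (\<integral>\<omega>. indicator U (CC \<omega>) * indicator T (H \<omega>) * psi S (CC \<omega>) \<partial>M)"
proof -
  note Cpm[measurable] = Cp_meas
  define \<phi>1 where "\<phi>1 = (\<lambda>x. indicator U (Cp (fst x) (snd x)) * indicator T (fst x) * indicator S (Fm (Cp (fst x) (snd x)) + snd x 0) :: real)"
  define \<phi>2 where "\<phi>2 = (\<lambda>x. indicator U (Cp (fst x) (snd x)) * indicator T (fst x) * psi S (Cp (fst x) (snd x)) :: real)"
  have m1[measurable]: "\<phi>1 \<in> borel_measurable (borel \<Otimes>\<^sub>M MN)" unfolding \<phi>1_def by measurable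
  have m2[measurable]: "\<phi>2 \<in> borel_measurable (borel \<Otimes>\<^sub>M MN)" unfolding \<phi>2_def by measurable
  have b1: "\<And>x. \<bar>\<phi>1 x\<bar> \<le> 1" unfolding \<phi>1_def by (auto split: split_indicator)
  have b2: "\<And>x. \<bar>\<phi>2 x\<bar> \<le> 1" unfolding \<phi>2_def using psi_bound by (auto split: split_indicator)
  have int1: "integrable M (\<lambda>\<omega>. \<phi>1 (H \<omega>, N \<omega>))" by (rule bint[where B=1]) (auto simp: b1)
  have int2: "integrable M (\<lambda>\<omega>. \<phi>2 (H \<omega>, N \<omega>))" by (rule bint[where B=1]) (auto simp: b2)
  have L: "(\<integral>\<omega>. indicator U (CC \<omega>) * indicator T (H \<omega>) * indicator S (Fm (CC \<omega>) + eps \<omega>) \<partial>M) = (\<integral>\<omega>. \<phi>1 (H \<omega>, N \<omega>) \<partial>M)"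
  proof (rule integral_cong_AE)
    show "AE \<omega> in M. indicator U (CC \<omega>) * indicator T (H \<omega>) * indicator S (Fm (CC \<omega>) + eps \<omega>) = \<phi>1 (H \<omega>, N \<omega>)"
      using CC_Cp by eventually_elim (simp add: \<phi>1_def N0)
  qed (use eps_meas in measurable)
  have R: "(\<integral>\<omega>. indicator U (CC \<omega>) * indicator T (H \<omega>) * psi S (CC \<omega>) \<partial>M) = (\<integral>\<omega>. \<phi>2 (H \<omega>, N \<omega>) \<partial>M)"
  proof (rule integral_cong_AE)
    show "AE \<omega> in M. indicator U (CC \<omega>) * indicator T (H \<omega>) * psi S (CC \<omega>) = \<phi>2 (H \<omega>, N \<omega>)"
      using CC_Cp by eventually_elim (simp add: \<phi>2_def)
  qed measurable
  have eqR: "{0..Suc p} = insert 0 {1..Suc p}" by auto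
  have pw: "\<And>h. (\<integral>n. \<phi>1 (h, n) \<partial>LN) = (\<integral>n. \<phi>2 (h, n) \<partial>LN)"
  proof -
    fix h :: "real^'k"
    have h: "h \<in> space borel" by simp
    have m1h: "(\<lambda>n. \<phi>1 (h, n)) \<in> borel_measurable MN" by (rule measurable_Pair2[OF m1 h])
    have m2h: "(\<lambda>n. \<phi>2 (h, n)) \<in> borel_measurable MN" by (rule measurable_Pair2[OF m2 h])
    have "(\<integral>n. \<phi>1 (h, n) \<partial>LN) = (\<integral>x. (\<integral>e. \<phi>1 (h, x(0 := e)) \<partial>LNi 0) \<partial>PiM {1..Suc p} LNi)"
      by (rule int_PiM_insert[OF m1h _ eqR, where B=1]) (auto simp: b1)
    also have "\<dots> = (\<integral>x. \<phi>2 (h, x) \<partial>PiM {1..Suc p} LNi)"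
    proof (rule Bochner_Integration.integral_cong[OF refl])
      fix x
      have "(\<integral>e. \<phi>1 (h, x(0 := e)) \<partial>LNi 0) = (\<integral>e. indicator U (Cp h x) * indicator T h * indicator S (Fm (Cp h x) + e) \<partial>LNi 0)"
        by (simp add: \<phi>1_def Cp_upd0)
      also have "\<dots> = indicator U (Cp h x) * indicator T h * psi S (Cp h x)"
        unfolding psi_def by simp
      finally show "(\<integral>e. \<phi>1 (h, x(0 := e)) \<partial>LNi 0) = \<phi>2 (h, x)" by (simp add: \<phi>2_def)
    qed
    also have "\<dots> = (\<integral>x. (\<integral>e. \<phi>2 (h, x(0 := e)) \<partial>LNi 0) \<partial>PiM {1..Suc p} LNi)"
    proof (rule Bochner_Integration.integral_cong[OF refl])
      fix x
      show "\<phi>2 (h, x) = (\<integral>e. \<phi>2 (h, x(0 := e)) \<partial>LNi 0)"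
        using prob_space.prob_space[OF prob_LNi] by (simp add: \<phi>2_def Cp_upd0)
    qed
    also have "\<dots> = (\<integral>n. \<phi>2 (h, n) \<partial>LN)"
      by (rule int_PiM_insert[OF m2h _ eqR, where B=1, symmetric]) (auto simp: b2)
    finally show "(\<integral>n. \<phi>1 (h, n) \<partial>LN) = (\<integral>n. \<phi>2 (h, n) \<partial>LN)" .
  qed
  show ?thesis unfolding L R FUB(1)[OF m1 int1] FUB(1)[OF m2 int2] pw ..
qed


lemma subalg_FC: "subalgebra M FC"
  unfolding FC_def subalgebra_def using sets_image_in_sets[of M "space M" CC FCM] CC_meas
  by simp

lemma sfs_FC: "sigma_finite_subalgebra M FC"
proof -
  interpret finite_measure_subalgebra M FC
    by unfold_locales (rule subalg_FC)
  show ?thesis by (rule finite_measure_subalgebra_is_sigma_finite) unfold_locales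
qed

lemma CC_FC[measurable]: "CC \<in> measurable FC FCM"
  unfolding FC_def by (rule measurable_vimage_algebra1) (use CC_meas in \<open>auto simp: measurable_def\<close>)

lemma FC_sets: "A \<in> sets FC \<Longrightarrow> \<exists>U \<in> sets FCM. A = CC -` U \<inter> space M"
  unfolding FC_def using CC_meas by (subst (asm) sets_vimage_algebra2) (auto simp: measurable_def)

lemma final: "cond_indep M borel (\<lambda>\<omega>. Y \<omega> - real_cond_exp M FH Y \<omega>) borel H FCM CC"
  unfolding cond_indep_def FC_def[symmetric]
proof (intro ballI)
  interpret SC: sigma_finite_subalgebra M FC by (rule sfs_FC)
  fix S :: "real set" and T :: "(real^'k) set"
  assume S[measurable]: "S \<in> sets borel" and T[measurable]: "T \<in> sets borel"
  define Zf where "Zf = (\<lambda>\<omega>. Y \<omega> - real_cond_exp M FH Y \<omega>)"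
  have Ym[measurable]: "Y \<in> borel_measurable M" using Y_int by (rule borel_measurable_integrable)
  have Zm[measurable]: "Zf \<in> borel_measurable M" unfolding Zf_def by measurable
  define f1 where "f1 = (\<lambda>\<omega>. indicator T (H \<omega>) * indicator S (Fm (CC \<omega>) + eps \<omega>) :: real)"
  define f2 where "f2 = (\<lambda>\<omega>. indicator S (Fm (CC \<omega>) + eps \<omega>) :: real)"
  define fB where "fB = (\<lambda>\<omega>. indicator T (H \<omega>) :: real)"
  have f1m[measurable]: "f1 \<in> borel_measurable M" unfolding f1_def using eps_meas by measurable
  have f2m[measurable]: "f2 \<in> borel_measurable M" unfolding f2_def using eps_meas by measurable
  have fBm[measurable]: "fB \<in> borel_measurable M" unfolding fB_def by measurable
  have s1[measurable]: "Zf -` S \<inter> H -` T \<inter> space M \<in> sets M"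
  proof -
    have "Zf -` S \<inter> H -` T \<inter> space M = (Zf -` S \<inter> space M) \<inter> (H -` T \<inter> space M)" by auto
    then show ?thesis by (auto intro!: sets.Int measurable_sets[OF Zm S] measurable_sets[OF H_meas T])
  qed
  have s2[measurable]: "Zf -` S \<inter> space M \<in> sets M" by (rule measurable_sets[OF Zm S])
  have s3[measurable]: "H -` T \<inter> space M \<in> sets M" by (rule measurable_sets[OF H_meas T])
  have a1: "AE \<omega> in M. real_cond_exp M FC (indicator (Zf -` S \<inter> H -` T \<inter> space M)) \<omega> = real_cond_exp M FC f1 \<omega>"
  proof (rule SC.real_cond_exp_cong)
    show "AE \<omega> in M. indicator (Zf -` S \<inter> H -` T \<inter> space M) \<omega> = f1 \<omega>"
      using Z_eq AE_space by eventually_elim (auto simp: f1_def Zf_def split: split_indicator)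
  qed measurable
  have a2: "AE \<omega> in M. real_cond_exp M FC (indicator (Zf -` S \<inter> space M)) \<omega> = real_cond_exp M FC f2 \<omega>"
  proof (rule SC.real_cond_exp_cong)
    show "AE \<omega> in M. indicator (Zf -` S \<inter> space M) \<omega> = f2 \<omega>"
      using Z_eq AE_space by eventually_elim (auto simp: f2_def Zf_def split: split_indicator)
  qed measurable
  have a3: "AE \<omega> in M. real_cond_exp M FC (indicator (H -` T \<inter> space M)) \<omega> = real_cond_exp M FC fB \<omega>"
  proof (rule SC.real_cond_exp_cong)
    show "AE \<omega> in M. indicator (H -` T \<inter> space M) \<omega> = fB \<omega>"
      using AE_space by eventually_elim (auto simp: fB_def split: split_indicator)
  qed measurable
  have psim[measurable]: "(\<lambda>\<omega>. psi S (CC \<omega>)) \<in> borel_measurable FC" by measurable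
  have psimM[measurable]: "(\<lambda>\<omega>. psi S (CC \<omega>)) \<in> borel_measurable M" by measurable
  have pb: "\<And>\<omega>. \<bar>psi S (CC \<omega>)\<bar> \<le> 1" by (rule psi_bound)
  have indA: "\<And>U \<omega>. \<omega> \<in> space M \<Longrightarrow> indicator (CC -` U \<inter> space M) \<omega> = (indicator U (CC \<omega>) :: real)"
    by (auto split: split_indicator)
  have K1: "AE \<omega> in M. real_cond_exp M FC f2 \<omega> = psi S (CC \<omega>)"
  proof (rule SC.real_cond_exp_charact)
    show "integrable M f2" by (rule bint[where B=1, OF f2m]) (auto simp: f2_def)
    show "integrable M (\<lambda>\<omega>. psi S (CC \<omega>))" by (rule bint[where B=1]) (auto simp: pb)
    show "(\<lambda>\<omega>. psi S (CC \<omega>)) \<in> borel_measurable FC" by (rule psim)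
    fix A assume "A \<in> sets FC"
    then obtain U where U[measurable]: "U \<in> sets FCM" and A: "A = CC -` U \<inter> space M" using FC_sets by blast
    have "(\<integral>\<omega>\<in>A. f2 \<omega> \<partial>M) = (\<integral>\<omega>. indicator U (CC \<omega>) * indicator UNIV (H \<omega>) * indicator S (Fm (CC \<omega>) + eps \<omega>) \<partial>M)"
      unfolding set_lebesgue_integral_def A by (rule Bochner_Integration.integral_cong[OF refl]) (simp add: indA f2_def)
    also have "\<dots> = (\<integral>\<omega>. indicator U (CC \<omega>) * indicator UNIV (H \<omega>) * psi S (CC \<omega>) \<partial>M)"
      by (rule KEY[OF U]) auto
    also have "\<dots> = (\<integral>\<omega>\<in>A. psi S (CC \<omega>) \<partial>M)"
      unfolding set_lebesgue_integral_def A by (rule Bochner_Integration.integral_cong[OF refl]) (simp add: indA)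
    finally show "(\<integral>\<omega>\<in>A. f2 \<omega> \<partial>M) = (\<integral>\<omega>\<in>A. psi S (CC \<omega>) \<partial>M)" .
  qed
  have intpB: "integrable M (\<lambda>\<omega>. psi S (CC \<omega>) * fB \<omega>)"
    by (rule bint[where B=1]) (auto simp: fB_def abs_mult pb split: split_indicator)
  have K2: "AE \<omega> in M. real_cond_exp M FC f1 \<omega> = psi S (CC \<omega>) * real_cond_exp M FC fB \<omega>"
  proof (rule SC.real_cond_exp_charact)
    show "integrable M f1" by (rule bint[where B=1, OF f1m]) (auto simp: f1_def split: split_indicator)
    show "integrable M (\<lambda>\<omega>. psi S (CC \<omega>) * real_cond_exp M FC fB \<omega>)"
      by (rule SC.real_cond_exp_intg(1)[OF intpB psim fBm])
    show "(\<lambda>\<omega>. psi S (CC \<omega>) * real_cond_exp M FC fB \<omega>) \<in> borel_measurable FC" by measurable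
    fix A assume "A \<in> sets FC"
    then obtain U where U[measurable]: "U \<in> sets FCM" and A: "A = CC -` U \<inter> space M" using FC_sets by blast
    have AFC[measurable]: "A \<in> sets FC" by fact
    have AM[measurable]: "A \<in> sets M" unfolding A by (rule measurable_sets[OF CC_meas U])
    have intg: "integrable M (\<lambda>\<omega>. (indicator A \<omega> * psi S (CC \<omega>)) * fB \<omega>)"
      by (rule bint[where B=1]) (auto simp: fB_def abs_mult pb split: split_indicator)
    have fm: "(\<lambda>\<omega>. indicator A \<omega> * psi S (CC \<omega>)) \<in> borel_measurable FC" by measurable
    have "(\<integral>\<omega>\<in>A. f1 \<omega> \<partial>M) = (\<integral>\<omega>. indicator U (CC \<omega>) * indicator T (H \<omega>) * indicator S (Fm (CC \<omega>) + eps \<omega>) \<partial>M)"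
      unfolding set_lebesgue_integral_def A by (rule Bochner_Integration.integral_cong[OF refl]) (simp add: indA f1_def)
    also have "\<dots> = (\<integral>\<omega>. indicator U (CC \<omega>) * indicator T (H \<omega>) * psi S (CC \<omega>) \<partial>M)"
      by (rule KEY[OF U]) auto
    also have "\<dots> = (\<integral>\<omega>. (indicator A \<omega> * psi S (CC \<omega>)) * fB \<omega> \<partial>M)"
      unfolding A by (rule Bochner_Integration.integral_cong[OF refl]) (simp add: indA fB_def)
    also have "\<dots> = (\<integral>\<omega>. (indicator A \<omega> * psi S (CC \<omega>)) * real_cond_exp M FC fB \<omega> \<partial>M)"
      by (rule SC.real_cond_exp_intg(2)[OF intg fm fBm, symmetric])
    also have "\<dots> = (\<integral>\<omega>\<in>A. psi S (CC \<omega>) * real_cond_exp M FC fB \<omega> \<partial>M)"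
      unfolding set_lebesgue_integral_def by (simp add: mult.assoc)
    finally show "(\<integral>\<omega>\<in>A. f1 \<omega> \<partial>M) = (\<integral>\<omega>\<in>A. psi S (CC \<omega>) * real_cond_exp M FC fB \<omega> \<partial>M)" .
  qed
  show "AE \<omega> in M. real_cond_exp M FC (indicator ((\<lambda>\<omega>. Y \<omega> - real_cond_exp M FH Y \<omega>) -` S \<inter> H -` T \<inter> space M)) \<omega> =
      real_cond_exp M FC (indicator ((\<lambda>\<omega>. Y \<omega> - real_cond_exp M FH Y \<omega>) -` S \<inter> space M)) \<omega> *
      real_cond_exp M FC (indicator (H -` T \<inter> space M)) \<omega>"
    using a1 a2 a3 K1 K2 unfolding Zf_def by eventually_elim simp
qed

end

theorem mainTheorem6:
  fixes M :: "'a measure"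
    and p :: nat
    and H :: "'a \<Rightarrow> real ^ 'k"
    and eps V :: "'a \<Rightarrow> real"
    and epsX :: "nat \<Rightarrow> 'a \<Rightarrow> real"
    and fX :: "nat \<Rightarrow> (nat \<Rightarrow> real) \<Rightarrow> real"
    and fY :: "(nat \<Rightarrow> real) \<Rightarrow> real \<Rightarrow> real"
    and gX :: "nat \<Rightarrow> real ^ 'k \<Rightarrow> real"
    and gY :: "real ^ 'k \<Rightarrow> real"
    and X :: "nat \<Rightarrow> 'a \<Rightarrow> real"
    and D Y :: "'a \<Rightarrow> real"
  assumes P: "prob_space M"
    and p: "1 \<le> p"
    \<comment> \<open>random variables\<close>
    and H_meas: "H \<in> borel_measurable M"
    and eps_meas: "eps \<in> borel_measurable M"
    and V_meas: "V \<in> borel_measurable M"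
    and epsX_meas: "\<And>j. j \<in> {1..p} \<Longrightarrow> epsX j \<in> borel_measurable M"
    \<comment> \<open>eps, eps_1..eps_p, V mutually independent, and jointly independent of H\<close>
    and indep_noise: "prob_space.indep_vars M (\<lambda>_. borel)
        (\<lambda>i. if i = 0 then eps else if i \<le> p then epsX i else V) {0..Suc p}"
    and indep_H: "prob_space.indep_set M
        (sets (vimage_algebra (space M)
          (\<lambda>\<omega>. restrict (\<lambda>i. (if i = 0 then eps else if i \<le> p then epsX i else V) \<omega>) {0..Suc p})
          (PiM {0..Suc p} (\<lambda>_. borel))))
        (sets (vimage_algebra (space M) H borel))"
    \<comment> \<open>mean zero noise\<close>
    and eps_int: "integrable M eps" and eps_mean: "prob_space.expectation M eps = 0"
    and epsX_int: "\<And>j. j \<in> {1..p} \<Longrightarrow> integrable M (epsX j)"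
    and epsX_mean: "\<And>j. j \<in> {1..p} \<Longrightarrow> prob_space.expectation M (epsX j) = 0"
    \<comment> \<open>V ~ Uniform(0,1)\<close>
    and V_unif: "distr M borel V = uniform_measure lborel {0..1}"
    \<comment> \<open>measurable structural functions; f_j depends on (X_1,...,X_{j-1})\<close>
    and fX_meas: "\<And>j. j \<in> {2..Suc p} \<Longrightarrow> fX j \<in> borel_measurable (PiM {1..<j} (\<lambda>_. borel))"
    and fY_meas: "(\<lambda>(x, d). fY x d) \<in> borel_measurable (PiM {1..p} (\<lambda>_. borel) \<Otimes>\<^sub>M borel)"
    and gX_meas: "\<And>j. j \<in> {1..Suc p} \<Longrightarrow> gX j \<in> borel_measurable borel"
    and gY_meas: "gY \<in> borel_measurable borel"
    \<comment> \<open>structural equations\<close>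
    and X1: "\<And>\<omega>. \<omega> \<in> space M \<Longrightarrow> X 1 \<omega> = gX 1 (H \<omega>) + epsX 1 \<omega>"
    and Xj: "\<And>j \<omega>. j \<in> {2..p} \<Longrightarrow> \<omega> \<in> space M \<Longrightarrow>
        X j \<omega> = fX j (restrict (\<lambda>i. X i \<omega>) {1..<j}) + gX j (H \<omega>) + epsX j \<omega>"
    and D_def: "\<And>\<omega>. \<omega> \<in> space M \<Longrightarrow>
        D \<omega> = (if V \<omega> \<le> 1 / ((1 + exp (fX (Suc p) (restrict (\<lambda>i. X i \<omega>) {1..p})))
                               * (1 + exp (gX (Suc p) (H \<omega>)))) then 1 else 0)"
    and Y_def: "\<And>\<omega>. \<omega> \<in> space M \<Longrightarrow>
        Y \<omega> = fY (restrict (\<lambda>i. X i \<omega>) {1..p}) (D \<omega>) + gY (H \<omega>) + eps \<omega>"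
    \<comment> \<open>all random variables involved are integrable\<close>
    and X_int: "\<And>j. j \<in> {1..p} \<Longrightarrow> integrable M (X j)"
    and Y_int: "integrable M Y"
    and D_int: "integrable M D"
    and fX_int: "\<And>j. j \<in> {2..p} \<Longrightarrow> integrable M (\<lambda>\<omega>. fX j (restrict (\<lambda>i. X i \<omega>) {1..<j}))"
    and fY_int: "integrable M (\<lambda>\<omega>. fY (restrict (\<lambda>i. X i \<omega>) {1..p}) (D \<omega>))"
    and gX_int: "\<And>j. j \<in> {1..p} \<Longrightarrow> integrable M (\<lambda>\<omega>. gX j (H \<omega>))"
    and gY_int: "integrable M (\<lambda>\<omega>. gY (H \<omega>))"
  shows "cond_indep M
           borel (\<lambda>\<omega>. Y \<omega> - real_cond_exp M (vimage_algebra (space M) H borel) Y \<omega>)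
           borel H
           (PiM {1..p} (\<lambda>_. borel) \<Otimes>\<^sub>M PiM {1..p} (\<lambda>_. borel) \<Otimes>\<^sub>M borel \<Otimes>\<^sub>M borel)
           (\<lambda>\<omega>. (restrict (\<lambda>i. X i \<omega>) {1..p},
                  restrict (\<lambda>i. real_cond_exp M (vimage_algebra (space M) H borel) (X i) \<omega>) {1..p},
                  real_cond_exp M (vimage_algebra (space M) H borel) D \<omega>,
                  D \<omega>))"
proof -
  interpret mdl M p H eps V epsX fX fY gX gY X D Y
    by (intro mdl.intro mdl_axioms.intro) (fact assms)+
  have e: "CC = (\<lambda>\<omega>. (restrict (\<lambda>i. X i \<omega>) {1..p},
                  restrict (\<lambda>i. real_cond_exp M (vimage_algebra (space M) H borel) (X i) \<omega>) {1..p},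
                  real_cond_exp M (vimage_algebra (space M) H borel) D \<omega>,
                  D \<omega>))"
    by (rule ext) (simp add: CC_def FH_def)
  show ?thesis using final unfolding e FH_def .
qed

end
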